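(* Let $\mathcal V$ be a finite set of nodes, $\mathcal P$ a finite set of labels, $\mathcal E$ a set of unordered pairs of nodes, and $\theta_{ip},\theta_{ij,pq}\in\mathbb R$ arbitrary. For $\vec\lambda\in\mathbb R^{\mathcal V}$, let $L(\cdot,\vec\lambda)$ be the pairwise pseudo-Boolean function $$L(\vec y,\vec\lambda)=\sum_{i\in\mathcal V}\sum_{p\in\mathcal P}\theta_{ip}y_{ip}+\sum_{\{i,j\}\in\mathcal E}\sum_{p,q\in\mathcal P}\theta_{ij,pq}y_{ip}y_{jq}+\sum_{i\in\mathcal V}\lambda_i\Big(\sum_{p\in\mathcal P}y_{ip}-1\Big)$$ of binary variables $\vec y$, and let $D_{QPBO}(\vec\lambda)$ be the optimal value of the standard LP relaxation of $\min_{\vec y}L(\vec y,\vec\lambda)$. Then $\max_{\vec\lambda\in\mathbb R^{\mathcal V}}D_{QPBO}(\vec\lambda)$ equals the optimal value of the linear program $$\min_{\vec y}\ \sum_{i\in\mathcal V}\sum_{p\in\mathcal P}\theta_{ip}y_{ip}+\sum_{\{i,j\}\in\mathcal E}\sum_{p,q\in\mathcal P}\theta_{ij,pq}y_{ij,pq}$$ subject to $y_{ip},y_{ij,pq}\in[0,1]$; $y_{ij,pq}\le y_{ip}$ and $y_{ij,pq}\le y_{jq}$ for all $\{i,j\}\in\mathcal E$, $p,q\in\mathcal P$; $y_{ij,pq}\ge y_{ip}+y_{jq}-1$ for all $\{i,j\}\in\mathcal E$, $p,q\in\mathcal P$; and $\sum_{p\in\mathcal P}y_{ip}=1$ for all $i\in\mathcal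 V$.
   Context: The standard LP relaxation of minimizing a pairwise pseudo-Boolean function $F(\vec y)=c+\sum_{i\in\mathcal A}a_iy_i+\sum_{\{i,j\}\in\mathcal B}b_{ij}y_iy_j$ over $\vec y\in\{0,1\}^{\mathcal A}$ (with $\mathcal B$ a set of pairs from $\mathcal A$, $c$ a constant) is: minimize $c+\sum_i a_iz_{i1}+\sum_{\{i,j\}}b_{ij}z_{ij,11}$ over nonnegative variables $z_{i1},z_{i0},z_{ij,11},z_{ij,10},z_{ij,01},z_{ij,00}$ subject to $z_{i1}+z_{i0}=1$, $z_{ij,10}+z_{ij,11}=z_{i1}$, $z_{ij,01}+z_{ij,00}=z_{i0}$, $z_{ij,01}+z_{ij,11}=z_{j1}$, $z_{ij,00}+z_{ij,10}=z_{j0}$. Here it is applied with variables $y_{ip}$ indexed by $(i,p)\in\mathcal V\times\mathcal P$ and pairs $\{(i,p),(j,q)\}$ for $\{i,j\}\in\mathcal E$. (This lower bound is the one computed by the QPBO algorithm; the method is called nonsubmodular relaxation.) *)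

theory Defs
  imports Complex_Main "HOL-Library.Extended_Real"
begin

text \<open>Each unordered pair {i,j} of B is represented by
  exactly one ordered pair (i,j) (an orientation), which fixes the meaning of
  the oriented LP variables z_{ij,10}, z_{ij,01}.\<close>

definition pb_fun ::
  "'a set \<Rightarrow> ('a \<Rightarrow> real) \<Rightarrow> ('a \<times> 'a) set \<Rightarrow> ('a \<times> 'a \<Rightarrow> real) \<Rightarrow> real
   \<Rightarrow> ('a \<Rightarrow> real) \<Rightarrow> real" where
  "pb_fun A a B b c y = c + (\<Sum>i\<in>A. a i * y i) + (\<Sum>e\<in>B. b e * y (fst e) * y (snd e))"

definition qpbo_feasible ::
  "'a set \<Rightarrow> ('a \<times> 'a) set \<Rightarrow> ('a \<Rightarrow> real) \<Rightarrow> ('a \<Rightarrow> real)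
   \<Rightarrow> ('a \<times> 'a \<Rightarrow> real) \<Rightarrow> ('a \<times> 'a \<Rightarrow> real) \<Rightarrow> ('a \<times> 'a \<Rightarrow> real) \<Rightarrow> ('a \<times> 'a \<Rightarrow> real)
   \<Rightarrow> bool" where
  "qpbo_feasible A B z1 z0 z11 z10 z01 z00 \<longleftrightarrow>
     (\<forall>i\<in>A. z1 i \<ge> 0 \<and> z0 i \<ge> 0 \<and> z1 i + z0 i = 1) \<and>
     (\<forall>(i,j)\<in>B. z11 (i,j) \<ge> 0 \<and> z10 (i,j) \<ge> 0 \<and> z01 (i,j) \<ge> 0 \<and> z00 (i,j) \<ge> 0 \<and>
        z10 (i,j) + z11 (i,j) = z1 i \<and>
        z01 (i,j) + z00 (i,j) = z0 i \<and>
        z01 (i,j) + z11 (i,j) = z1 j \<and>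
        z00 (i,j) + z10 (i,j) = z0 j)"

definition qpbo_lp_value ::
  "'a set \<Rightarrow> ('a \<Rightarrow> real) \<Rightarrow> ('a \<times> 'a) set \<Rightarrow> ('a \<times> 'a \<Rightarrow> real) \<Rightarrow> real \<Rightarrow> ereal" where
  "qpbo_lp_value A a B b c =
     Inf { ereal (c + (\<Sum>i\<in>A. a i * z1 i) + (\<Sum>e\<in>B. b e * z11 e)) | z1 z0 z11 z10 z01 z00.
           qpbo_feasible A B z1 z0 z11 z10 z01 z00 }"

text \<open>Nodes V, labels P, edges E given as oriented pairs (one orientation per
  unordered pair). Unary potentials th1 i p, pairwise potentials th2 i j p q
  (multiplying y_{ip} y_{jq} for the edge (i,j)).\<close>

definition lag_vars :: "('v \<times> 'v) set \<Rightarrow> 'p set \<Rightarrow> (('v \<times> 'p) \<times> ('v \<times> 'p)) set" where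
  "lag_vars E P = {((i,p),(j,q)) | i j p q. (i,j) \<in> E \<and> p \<in> P \<and> q \<in> P}"

definition lag_lin :: "('v \<Rightarrow> 'p \<Rightarrow> real) \<Rightarrow> ('v \<Rightarrow> real) \<Rightarrow> 'v \<times> 'p \<Rightarrow> real" where
  "lag_lin th1 lam = (\<lambda>(i,p). th1 i p + lam i)"

definition lag_quad :: "('v \<Rightarrow> 'v \<Rightarrow> 'p \<Rightarrow> 'p \<Rightarrow> real) \<Rightarrow> ('v \<times> 'p) \<times> ('v \<times> 'p) \<Rightarrow> real" where
  "lag_quad th2 = (\<lambda>((i,p),(j,q)). th2 i j p q)"

definition lag_const :: "'v set \<Rightarrow> ('v \<Rightarrow> real) \<Rightarrow> real" where
  "lag_const V lam = - (\<Sum>i\<in>V. lam i)"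

text \<open>L(y,lambda) written out; equals pb_fun with the coefficients above.\<close>
definition lagrangian ::
  "'v set \<Rightarrow> 'p set \<Rightarrow> ('v \<times> 'v) set \<Rightarrow> ('v \<Rightarrow> 'p \<Rightarrow> real) \<Rightarrow> ('v \<Rightarrow> 'v \<Rightarrow> 'p \<Rightarrow> 'p \<Rightarrow> real)
   \<Rightarrow> ('v \<Rightarrow> real) \<Rightarrow> ('v \<times> 'p \<Rightarrow> real) \<Rightarrow> real" where
  "lagrangian V P E th1 th2 lam y =
     (\<Sum>i\<in>V. \<Sum>p\<in>P. th1 i p * y (i,p))
     + (\<Sum>(i,j)\<in>E. \<Sum>p\<in>P. \<Sum>q\<in>P. th2 i j p q * y (i,p) * y (j,q))
     + (\<Sum>i\<in>V. lam i * ((\<Sum>p\<in>P. y (i,p)) - 1))"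

definition D_QPBO ::
  "'v set \<Rightarrow> 'p set \<Rightarrow> ('v \<times> 'v) set \<Rightarrow> ('v \<Rightarrow> 'p \<Rightarrow> real) \<Rightarrow> ('v \<Rightarrow> 'v \<Rightarrow> 'p \<Rightarrow> 'p \<Rightarrow> real)
   \<Rightarrow> ('v \<Rightarrow> real) \<Rightarrow> ereal" where
  "D_QPBO V P E th1 th2 lam =
     qpbo_lp_value (V \<times> P) (lag_lin th1 lam) (lag_vars E P) (lag_quad th2) (lag_const V lam)"

definition local_lp_feasible ::
  "'v set \<Rightarrow> 'p set \<Rightarrow> ('v \<times> 'v) set \<Rightarrow> ('v \<Rightarrow> 'p \<Rightarrow> real) \<Rightarrow> ('v \<Rightarrow> 'v \<Rightarrow> 'p \<Rightarrow> 'p \<Rightarrow> real) \<Rightarrow> bool" where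
  "local_lp_feasible V P E y1 y2 \<longleftrightarrow>
     (\<forall>i\<in>V. \<forall>p\<in>P. 0 \<le> y1 i p \<and> y1 i p \<le> 1) \<and>
     (\<forall>(i,j)\<in>E. \<forall>p\<in>P. \<forall>q\<in>P.
        0 \<le> y2 i j p q \<and> y2 i j p q \<le> 1 \<and>
        y2 i j p q \<le> y1 i p \<and> y2 i j p q \<le> y1 j q \<and>
        y2 i j p q \<ge> y1 i p + y1 j q - 1) \<and>
     (\<forall>i\<in>V. (\<Sum>p\<in>P. y1 i p) = 1)"

definition local_lp_value ::
  "'v set \<Rightarrow> 'p set \<Rightarrow> ('v \<times> 'v) set \<Rightarrow> ('v \<Rightarrow> 'p \<Rightarrow> real) \<Rightarrow> ('v \<Rightarrow> 'v \<Rightarrow> 'p \<Rightarrow> 'p \<Rightarrow> real) \<Rightarrow> ereal" where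
  "local_lp_value V P E th1 th2 =
     Inf { ereal ((\<Sum>i\<in>V. \<Sum>p\<in>P. th1 i p * y1 i p)
                 + (\<Sum>(i,j)\<in>E. \<Sum>p\<in>P. \<Sum>q\<in>P. th2 i j p q * y2 i j p q)) | y1 y2.
           local_lp_feasible V P E y1 y2 }"

end

theory Submission
  imports Defs
begin


type_synonym 'x form = "('x \<Rightarrow> real) \<times> real"

definition ev :: "'x set \<Rightarrow> 'x form \<Rightarrow> ('x \<Rightarrow> real) \<Rightarrow> real" where
  "ev I f x = snd f + (\<Sum>i\<in>I. fst f i * x i)"
definition fadd :: "'x form \<Rightarrow> 'x form \<Rightarrow> 'x form" where
  "fadd f g = (\<lambda>i. fst f i + fst g i, snd f + snd g)"
definition fscale :: "real \<Rightarrow> 'x form \<Rightarrow> 'x form" where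
  "fscale r f = (\<lambda>i. r * fst f i, r * snd f)"

inductive_set fcone :: "'x form set \<Rightarrow> 'x form set" for K where
  zero: "((\<lambda>_. 0), 0) \<in> fcone K"
| base: "f \<in> K \<Longrightarrow> f \<in> fcone K"
| add: "f \<in> fcone K \<Longrightarrow> g \<in> fcone K \<Longrightarrow> fadd f g \<in> fcone K"
| scale: "f \<in> fcone K \<Longrightarrow> 0 \<le> r \<Longrightarrow> fscale r f \<in> fcone K"

lemma ev_fadd: "ev I (fadd f g) x = ev I f x + ev I g x"
  by (simp add: ev_def fadd_def sum.distrib distrib_right)

lemma ev_fscale: "ev I (fscale r f) x = r * ev I f x"
  by (simp add: ev_def fscale_def sum_distrib_left distrib_left mult.assoc)

lemma ev_zero: "ev I ((\<lambda>_. 0), 0) x = 0"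
  by (simp add: ev_def)

lemma fcone_nonneg: "f \<in> fcone K \<Longrightarrow> \<forall>g\<in>K. 0 \<le> ev I g x \<Longrightarrow> 0 \<le> ev I f x"
  by (induction f rule: fcone.induct) (auto simp: ev_fadd ev_fscale ev_zero)

lemma fcone_least:
  assumes "((\<lambda>_. 0), 0) \<in> S" "K \<subseteq> S" "\<And>f g. f \<in> S \<Longrightarrow> g \<in> S \<Longrightarrow> fadd f g \<in> S"
    "\<And>f r. f \<in> S \<Longrightarrow> 0 \<le> r \<Longrightarrow> fscale r f \<in> S"
  shows "fcone K \<subseteq> S"
proof
  fix f assume "f \<in> fcone K" then show "f \<in> S"
    by (induction f rule: fcone.induct) (use assms in auto)
qed

lemma fcone_sub: "K' \<subseteq> fcone K \<Longrightarrow> fcone K' \<subseteq> fcone K"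
  by (rule fcone_least) (auto intro: fcone.intros)

lemma fm:
  "finite I \<Longrightarrow> finite K \<Longrightarrow> \<not>(\<exists>x. \<forall>f\<in>K. 0 \<le> ev I f x)
   \<Longrightarrow> \<exists>f\<in>fcone K. (\<forall>i\<in>I. fst f i = 0) \<and> snd f < 0"
proof (induction I arbitrary: K rule: finite_induct)
  case empty
  then obtain f where "f \<in> K" "snd f < 0" by (auto simp: ev_def not_le)
  then show ?case by (auto intro: fcone.base)
next
  case (insert j I K)
  define Kz where "Kz = {f\<in>K. fst f j = 0}"
  define Kp where "Kp = {f\<in>K. fst f j > 0}"
  define Kn where "Kn = {f\<in>K. fst f j < 0}"
  define cb where "cb = (\<lambda>(f,g). fadd (fscale (- fst g j) f) (fscale (fst f j) g))"
  define K' where "K' = Kz \<union> cb ` (Kp \<times> Kn)"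
  have finK: "finite Kz" "finite Kp" "finite Kn" using insert.prems(1)
    by (auto simp: Kz_def Kp_def Kn_def)
  have fin: "finite K'" using finK by (simp add: K'_def)
  have sub: "K' \<subseteq> fcone K"
  proof
    fix h assume "h \<in> K'"
    then show "h \<in> fcone K"
    proof (cases "h \<in> Kz")
      case True then show ?thesis by (auto simp: Kz_def intro: fcone.base)
    next
      case False
      with \<open>h \<in> K'\<close> obtain f g where fg: "f \<in> Kp" "g \<in> Kn" "h = cb (f,g)" by (auto simp: K'_def)
      then show ?thesis unfolding cb_def
        by (auto simp: Kp_def Kn_def intro!: fcone.add fcone.scale intro: fcone.base)
    qed
  qed
  have j0: "\<forall>f\<in>K'. fst f j = 0"
    by (auto simp: K'_def Kz_def cb_def fadd_def fscale_def)
  have infeas: "\<not>(\<exists>x. \<forall>f\<in>K'. 0 \<le> ev I f x)"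
  proof
    assume "\<exists>x. \<forall>f\<in>K'. 0 \<le> ev I f x"
    then obtain x where x: "\<forall>f\<in>K'. 0 \<le> ev I f x" by blast
    have evj: "ev (insert j I) f (x(j:=v)) = ev I f x + fst f j * v" for f v
    proof -
      have "(\<Sum>i\<in>I. fst f i * (x(j:=v)) i) = (\<Sum>i\<in>I. fst f i * x i)"
        using insert.hyps(2) by (intro sum.cong) auto
      then show ?thesis using insert.hyps by (simp add: ev_def)
    qed
    have pair: "- ev I f x / fst f j \<le> ev I g x / (- fst g j)" if "f \<in> Kp" "g \<in> Kn" for f g
    proof -
      have "cb (f,g) \<in> K'" using that by (auto simp: K'_def)
      then have h: "0 \<le> (- fst g j) * ev I f x + fst f j * ev I g x"
        using x by (auto simp: cb_def ev_fadd ev_fscale)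
      have p: "fst f j > 0" "- fst g j > 0" using that by (auto simp: Kp_def Kn_def)
      show ?thesis using h p by (simp add: divide_simps) (simp add: algebra_simps)
    qed
    define v where "v = (if Kp = {} then (if Kn = {} then 0 else Min ((\<lambda>g. ev I g x / (- fst g j)) ` Kn))
                         else Max ((\<lambda>f. - ev I f x / fst f j) ` Kp))"
    have "\<forall>f\<in>K. 0 \<le> ev (insert j I) f (x(j:=v))"
    proof
      fix f assume fK: "f \<in> K"
      consider "fst f j = 0" | "fst f j > 0" | "fst f j < 0" by linarith
      then show "0 \<le> ev (insert j I) f (x(j:=v))"
      proof cases
        case 1
        then have "f \<in> K'" using fK by (auto simp: K'_def Kz_def)
        then show ?thesis using x 1 by (simp add: evj)
      next
        case 2
        then have fp: "f \<in> Kp" using fK by (auto simp: Kp_def)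
        then have "v \<ge> - ev I f x / fst f j" using finK
          by (auto simp: v_def intro!: Max_ge)
        then show ?thesis using 2 by (simp add: evj divide_simps) (simp add: algebra_simps)
      next
        case 3
        then have gn: "f \<in> Kn" using fK by (auto simp: Kn_def)
        have "v \<le> ev I f x / (- fst f j)"
        proof (cases "Kp = {}")
          case True then show ?thesis using gn finK by (auto simp: v_def intro!: Min_le)
        next
          case False then show ?thesis using gn finK pair by (auto simp: v_def Max_le_iff)
        qed
        then show ?thesis using 3 by (simp add: evj divide_simps) (simp add: algebra_simps)
      qed
    qed
    then show False using insert.prems(2) by blast
  qed
  from insert.IH[OF fin infeas] obtain f where f: "f \<in> fcone K'" "\<forall>i\<in>I. fst f i = 0" "snd f < 0"
    by blast
  have "fcone K' \<subseteq> {f. fst f j = 0}"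
    by (rule fcone_least) (use j0 in \<open>auto simp: fadd_def fscale_def\<close>)
  then show ?case using f sub fcone_sub by blast
qed

definition hom :: "'x form \<Rightarrow> 'x option form" where
  "hom f = (\<lambda>v. case v of None \<Rightarrow> snd f | Some i \<Rightarrow> fst f i, 0)"

lemma farkas:
  assumes finI: "finite I" and finK: "finite K"
    and feas: "\<forall>f\<in>K. 0 \<le> ev I f x0"
    and impl: "\<And>x. \<forall>f\<in>K. 0 \<le> ev I f x \<Longrightarrow> 0 \<le> d + (\<Sum>i\<in>I. u i * x i)"
  shows "\<exists>\<psi>\<in>fcone K. (\<forall>i\<in>I. fst \<psi> i = u i) \<and> snd \<psi> \<le> d"
proof -
  define tp :: "'a option form" where "tp = (\<lambda>v. if v = None then 1 else 0, 0)"
  define nt :: "'a option form" where "nt = (\<lambda>v. case v of None \<Rightarrow> -d | Some i \<Rightarrow> -u i, -1)"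
  define J where "J = insert None (Some ` I)"
  define Kh where "Kh = hom ` K \<union> {tp, nt}"
  have evJ: "ev J h X = snd h + fst h None * X None + (\<Sum>i\<in>I. fst h (Some i) * X (Some i))" for h X
  proof -
    have "(\<Sum>v\<in>Some ` I. fst h v * X v) = (\<Sum>i\<in>I. fst h (Some i) * X (Some i))"
      by (subst sum.reindex) auto
    then show ?thesis using finI by (simp add: ev_def J_def)
  qed
  have infeas: "\<not>(\<exists>X. \<forall>f\<in>Kh. 0 \<le> ev J f X)"
  proof
    assume "\<exists>X. \<forall>f\<in>Kh. 0 \<le> ev J f X"
    then obtain X where X: "\<forall>f\<in>Kh. 0 \<le> ev J f X" by blast
    define t where "t = X None"
    define x where "x = (\<lambda>i. X (Some i))"
    have t0: "0 \<le> t" using X[rule_format, of tp] by (simp add: Kh_def evJ tp_def t_def)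
    have hK: "0 \<le> snd f * t + (\<Sum>i\<in>I. fst f i * x i)" if "f \<in> K" for f
      using X[rule_format, of "hom f"] that by (simp add: Kh_def evJ hom_def t_def x_def)
    have hn: "0 \<le> -1 - d * t - (\<Sum>i\<in>I. u i * x i)"
      using X[rule_format, of nt] by (simp add: Kh_def evJ nt_def t_def x_def sum_negf)
    show False
    proof (cases "t > 0")
      case True
      define y where "y = (\<lambda>i. x i / t)"
      have sy: "(\<Sum>i\<in>I. w i * y i) = (\<Sum>i\<in>I. w i * x i) / t" for w
        by (simp add: y_def sum_divide_distrib)
      have "\<forall>f\<in>K. 0 \<le> ev I f y"
      proof
        fix f assume "f \<in> K"
        from hK[OF this] True have "0 \<le> (snd f * t + (\<Sum>i\<in>I. fst f i * x i)) / t" by simp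
        also have "\<dots> = ev I f y" using True by (simp add: ev_def sy add_divide_distrib)
        finally show "0 \<le> ev I f y" .
      qed
      from impl[OF this] have "0 \<le> d + (\<Sum>i\<in>I. u i * x i) / t" by (simp add: sy)
      then have "0 \<le> (d * t + (\<Sum>i\<in>I. u i * x i)) / t" using True by (simp add: add_divide_distrib)
      then have "0 \<le> d * t + (\<Sum>i\<in>I. u i * x i)" using True by (simp add: zero_le_divide_iff)
      with hn show False by linarith
    next
      case False
      with t0 have t: "t = 0" by simp
      define s where "s = d + (\<Sum>i\<in>I. u i * x0 i) + 1"
      have T0: "0 \<le> d + (\<Sum>i\<in>I. u i * x0 i)" using impl[OF feas] .
      then have s0: "0 \<le> s" by (simp add: s_def)
      define z where "z = (\<lambda>i. x0 i + s * x i)"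
      have sz: "(\<Sum>i\<in>I. w i * z i) = (\<Sum>i\<in>I. w i * x0 i) + s * (\<Sum>i\<in>I. w i * x i)" for w
        by (simp add: z_def distrib_left sum.distrib sum_distrib_left algebra_simps)
      have "\<forall>f\<in>K. 0 \<le> ev I f z"
      proof
        fix f assume f: "f \<in> K"
        have a: "0 \<le> (\<Sum>i\<in>I. fst f i * x i)" using hK[OF f] t by simp
        have b: "0 \<le> ev I f x0" using feas f by blast
        have "ev I f z = ev I f x0 + s * (\<Sum>i\<in>I. fst f i * x i)" by (simp add: ev_def sz)
        then show "0 \<le> ev I f z" using a b s0 by simp
      qed
      from impl[OF this] have c: "0 \<le> d + (\<Sum>i\<in>I. u i * x0 i) + s * (\<Sum>i\<in>I. u i * x i)"
        by (simp add: sz add.assoc)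
      have e: "(\<Sum>i\<in>I. u i * x i) \<le> -1" using hn t by simp
      have "s * (\<Sum>i\<in>I. u i * x i) \<le> s * (-1)" using mult_left_mono[OF e s0] .
      with c show False by (simp add: s_def)
    qed
  qed
  have finKh: "finite Kh" using finK by (simp add: Kh_def)
  have finJ: "finite J" using finI by (simp add: J_def)
  from fm[OF finJ finKh infeas] obtain \<phi> where
    phi: "\<phi> \<in> fcone Kh" "\<forall>i\<in>J. fst \<phi> i = 0" "snd \<phi> < 0" by blast
  define Q where "Q = {fadd (hom \<psi>) (fadd (fscale a tp) (fscale b nt)) | \<psi> a b. \<psi> \<in> fcone K \<and> 0 \<le> a \<and> 0 \<le> b}"
  have "fcone Kh \<subseteq> Q"
  proof (rule fcone_least)
    show "((\<lambda>_. 0), 0) \<in> Q" unfolding Q_def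
      apply (rule CollectI, rule exI[of _ "((\<lambda>_. 0), 0)"], rule exI[of _ 0], rule exI[of _ 0])
      by (auto simp: fadd_def fscale_def hom_def fun_eq_iff fcone.zero split: option.split)
    show "Kh \<subseteq> Q"
    proof
      fix h assume "h \<in> Kh"
      then consider f where "f \<in> K" "h = hom f" | "h = tp" | "h = nt" by (auto simp: Kh_def)
      then show "h \<in> Q"
      proof cases
        case 1 show ?thesis unfolding Q_def
          apply (rule CollectI, rule exI[of _ f], rule exI[of _ 0], rule exI[of _ 0])
          using 1 by (auto simp: fadd_def fscale_def hom_def fun_eq_iff fcone.base split: option.split)
      next
        case 2 show ?thesis unfolding Q_def
          apply (rule CollectI, rule exI[of _ "((\<lambda>_. 0), 0)"], rule exI[of _ 1], rule exI[of _ 0])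
          using 2 by (auto simp: fadd_def fscale_def hom_def fun_eq_iff fcone.zero tp_def nt_def split: option.split)
      next
        case 3 show ?thesis unfolding Q_def
          apply (rule CollectI, rule exI[of _ "((\<lambda>_. 0), 0)"], rule exI[of _ 0], rule exI[of _ 1])
          using 3 by (auto simp: fadd_def fscale_def hom_def fun_eq_iff fcone.zero nt_def tp_def split: option.split)
      qed
    qed
    show "fadd f g \<in> Q" if "f \<in> Q" "g \<in> Q" for f g
    proof -
      from that obtain \<psi>1 a1 b1 \<psi>2 a2 b2 where
        h: "f = fadd (hom \<psi>1) (fadd (fscale a1 tp) (fscale b1 nt))" "\<psi>1 \<in> fcone K" "0 \<le> a1" "0 \<le> b1"
           "g = fadd (hom \<psi>2) (fadd (fscale a2 tp) (fscale b2 nt))" "\<psi>2 \<in> fcone K" "0 \<le> a2" "0 \<le> b2"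
        unfolding Q_def by blast
      show ?thesis unfolding Q_def
        apply (rule CollectI, rule exI[of _ "fadd \<psi>1 \<psi>2"], rule exI[of _ "a1+a2"], rule exI[of _ "b1+b2"])
        using h fcone.add[OF h(2) h(6)] by (auto simp: fadd_def fscale_def hom_def fun_eq_iff algebra_simps split: option.split)
    qed
    show "fscale r f \<in> Q" if "f \<in> Q" "0 \<le> r" for f r
    proof -
      from that obtain \<psi>1 a1 b1 where
        h: "f = fadd (hom \<psi>1) (fadd (fscale a1 tp) (fscale b1 nt))" "\<psi>1 \<in> fcone K" "0 \<le> a1" "0 \<le> b1"
        unfolding Q_def by blast
      show ?thesis unfolding Q_def
        apply (rule CollectI, rule exI[of _ "fscale r \<psi>1"], rule exI[of _ "r*a1"], rule exI[of _ "r*b1"])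
        using h that fcone.scale[OF h(2) that(2)] by (auto simp: fadd_def fscale_def hom_def fun_eq_iff algebra_simps split: option.split)
    qed
  qed
  with phi obtain \<psi> a b where
    q: "\<phi> = fadd (hom \<psi>) (fadd (fscale a tp) (fscale b nt))" "\<psi> \<in> fcone K" "0 \<le> a" "0 \<le> b"
    unfolding Q_def by blast
  have b: "b > 0" using phi(3) q(1) by (simp add: fadd_def fscale_def hom_def tp_def nt_def)
  have none: "snd \<psi> + a - b * d = 0" using phi(2) q(1)
    by (simp add: J_def fadd_def fscale_def hom_def tp_def nt_def)
  have some: "fst \<psi> i - b * u i = 0" if "i \<in> I" for i using phi(2) q(1) that
    by (simp add: J_def fadd_def fscale_def hom_def tp_def nt_def)
  show ?thesis
  proof (intro bexI conjI ballI)
    show "fscale (1/b) \<psi> \<in> fcone K" using q b by (auto intro: fcone.scale)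
    show "fst (fscale (1/b) \<psi>) i = u i" if "i \<in> I" for i
      using some[OF that] b by (simp add: fscale_def field_simps)
    show "snd (fscale (1/b) \<psi>) \<le> d"
      using none b q(3) by (simp add: fscale_def field_simps)
  qed
qed



definition eI :: "'x \<Rightarrow> 'x \<Rightarrow> real" where "eI a = (\<lambda>u. if u = a then 1 else 0)"

lemma sum_eI: "finite I \<Longrightarrow> a \<in> I \<Longrightarrow> (\<Sum>u\<in>I. eI a u * y u) = y a"
proof -
  assume "finite I" "a \<in> I"
  have "(\<Sum>u\<in>I. eI a u * y u) = (\<Sum>u\<in>I. if u = a then y u else 0)"
    by (rule sum.cong) (auto simp: eI_def)
  then show ?thesis using \<open>finite I\<close> \<open>a \<in> I\<close> by simp
qed

lemma ev_e1: "finite I \<Longrightarrow> a \<in> I \<Longrightarrow> ev I (\<lambda>u. eI a u, c) y = c + y a"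
  by (simp add: ev_def sum_eI)

lemma ev_eneg: "finite I \<Longrightarrow> a \<in> I \<Longrightarrow> ev I (\<lambda>u. - eI a u, c) y = c - y a"
  by (simp add: ev_def sum_eI sum_negf)

lemma ev_e2: "finite I \<Longrightarrow> a \<in> I \<Longrightarrow> b \<in> I \<Longrightarrow> ev I (\<lambda>u. eI a u - eI b u, c) y = c + y a - y b"
  by (simp add: ev_def sum_eI left_diff_distrib sum_subtractf)

lemma ev_e3: "finite I \<Longrightarrow> a \<in> I \<Longrightarrow> b \<in> I \<Longrightarrow> m \<in> I \<Longrightarrow>
   ev I (\<lambda>u. eI m u - eI a u - eI b u, c) y = c + y m - y a - y b"
  by (simp add: ev_def sum_eI left_diff_distrib sum_subtractf)

lemma ev_gsum: "finite I \<Longrightarrow> finite P \<Longrightarrow> \<forall>p\<in>P. f p \<in> I \<Longrightarrow>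
   ev I (\<lambda>u. \<Sum>p\<in>P. eI (f p) u, c) y = c + (\<Sum>p\<in>P. y (f p))"
  by (simp add: ev_def sum_distrib_right sum_eI cong: sum.cong) (subst sum.swap, simp add: sum_eI)

lemma ev_gsumneg: "finite I \<Longrightarrow> finite P \<Longrightarrow> \<forall>p\<in>P. f p \<in> I \<Longrightarrow>
   ev I (\<lambda>u. - (\<Sum>p\<in>P. eI (f p) u), c) y = c - (\<Sum>p\<in>P. y (f p))"
  by (simp add: ev_def sum_distrib_right sum_negf) (subst sum.swap, simp add: sum_eI)

lemma lag_vars_eq: "lag_vars E P = (\<lambda>((i,j),(p,q)). ((i,p),(j,q))) ` (E \<times> (P \<times> P))"
proof
  show "lag_vars E P \<subseteq> (\<lambda>((i,j),(p,q)). ((i,p),(j,q))) ` (E \<times> (P \<times> P))"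
  proof
    fix x assume "x \<in> lag_vars E P"
    then obtain i j p q where "x = ((i,p),(j,q))" "(i,j) \<in> E" "p \<in> P" "q \<in> P"
      by (auto simp: lag_vars_def)
    then show "x \<in> (\<lambda>((i,j),(p,q)). ((i,p),(j,q))) ` (E \<times> (P \<times> P))"
      by (intro image_eqI[of _ _ "((i,j),(p,q))"]) auto
  qed
qed (auto simp: lag_vars_def)

lemma lag_vars_inj: "inj_on (\<lambda>((i,j),(p,q)). ((i,p),(j,q))) (E \<times> (P \<times> P))"
  by (auto simp: inj_on_def)

lemma D_obj:
  assumes "finite V" "finite P"
  shows "lag_const V lam + (\<Sum>a\<in>V\<times>P. lag_lin th1 lam a * z1 a) + (\<Sum>e\<in>lag_vars E P. lag_quad th2 e * z11 e)
    = (\<Sum>(i,p)\<in>V\<times>P. th1 i p * z1 (i,p)) + (\<Sum>((i,j),(p,q))\<in>E\<times>(P\<times>P). th2 i j p q * z11 ((i,p),(j,q)))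
      + (\<Sum>i\<in>V. lam i * ((\<Sum>p\<in>P. z1 (i,p)) - 1))"
proof -
  have q: "(\<Sum>e\<in>lag_vars E P. lag_quad th2 e * z11 e) = (\<Sum>((i,j),(p,q))\<in>E\<times>(P\<times>P). th2 i j p q * z11 ((i,p),(j,q)))"
    unfolding lag_vars_eq by (subst sum.reindex[OF lag_vars_inj]) (auto simp: lag_quad_def case_prod_beta intro!: sum.cong)
  have l: "(\<Sum>a\<in>V\<times>P. lag_lin th1 lam a * z1 a) = (\<Sum>(i,p)\<in>V\<times>P. th1 i p * z1 (i,p)) + (\<Sum>(i,p)\<in>V\<times>P. lam i * z1 (i,p))"
    by (simp add: lag_lin_def case_prod_beta distrib_right sum.distrib)
  have l2: "(\<Sum>(i,p)\<in>V\<times>P. lam i * z1 (i,p)) = (\<Sum>i\<in>V. lam i * (\<Sum>p\<in>P. z1 (i,p)))"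
    by (simp add: sum.cartesian_product[symmetric] sum_distrib_left)
  show ?thesis unfolding q l l2 lag_const_def
    by (simp add: right_diff_distrib sum_subtractf)
qed

lemma local_obj_eq:
  "(\<Sum>i\<in>V. \<Sum>p\<in>P. th1 i p * y1 i p) + (\<Sum>(i,j)\<in>E. \<Sum>p\<in>P. \<Sum>q\<in>P. th2 i j p q * y2 i j p q)
   = (\<Sum>(i,p)\<in>V\<times>P. th1 i p * y1 i p) + (\<Sum>((i,j),(p,q))\<in>E\<times>(P\<times>P). th2 i j p q * y2 i j p q)"
proof -
  have "(\<Sum>(i,j)\<in>E. \<Sum>p\<in>P. \<Sum>q\<in>P. th2 i j p q * y2 i j p q) = (\<Sum>(i,j)\<in>E. \<Sum>(p,q)\<in>P\<times>P. th2 i j p q * y2 i j p q)"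
    by (simp add: sum.cartesian_product)
  also have "\<dots> = (\<Sum>((i,j),(p,q))\<in>E\<times>(P\<times>P). th2 i j p q * y2 i j p q)"
    by (simp add: sum.cartesian_product case_prod_beta)
  finally show ?thesis by (simp add: sum.cartesian_product)
qed

lemma weak:
  assumes fin: "finite V" "finite P" and EV: "E \<subseteq> V \<times> V" and feas: "local_lp_feasible V P E y1 y2"
  shows "D_QPBO V P E th1 th2 lam \<le> ereal ((\<Sum>i\<in>V. \<Sum>p\<in>P. th1 i p * y1 i p) + (\<Sum>(i,j)\<in>E. \<Sum>p\<in>P. \<Sum>q\<in>P. th2 i j p q * y2 i j p q))"
proof -
  define z1 where "z1 = (\<lambda>a::'a\<times>'b. y1 (fst a) (snd a))"
  define z0 where "z0 = (\<lambda>a. 1 - z1 a)"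
  define z11 where "z11 = (\<lambda>e::('a\<times>'b)\<times>('a\<times>'b). y2 (fst (fst e)) (fst (snd e)) (snd (fst e)) (snd (snd e)))"
  define z10 where "z10 = (\<lambda>e. z1 (fst e) - z11 e)"
  define z01 where "z01 = (\<lambda>e. z1 (snd e) - z11 e)"
  define z00 where "z00 = (\<lambda>e. z0 (fst e) - z01 e)"
  have qf: "qpbo_feasible (V\<times>P) (lag_vars E P) z1 z0 z11 z10 z01 z00"
    using feas unfolding qpbo_feasible_def local_lp_feasible_def lag_vars_def
    apply (auto simp: z1_def z0_def z11_def z10_def z01_def z00_def)
    apply (drule (1) bspec)
    apply (simp only: prod.case)
    apply (drule_tac x=b in bspec, assumption, drule_tac x=ba in bspec, assumption)
    by auto
  have val: "ereal (lag_const V lam + (\<Sum>a\<in>V\<times>P. lag_lin th1 lam a * z1 a) + (\<Sum>e\<in>lag_vars E P. lag_quad th2 e * z11 e))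
     \<in> { ereal (c + (\<Sum>i\<in>V\<times>P. a i * z1 i) + (\<Sum>e\<in>lag_vars E P. b e * z11 e)) | z1 z0 z11 z10 z01 z00.
           qpbo_feasible (V\<times>P) (lag_vars E P) z1 z0 z11 z10 z01 z00 }"
    if "a = lag_lin th1 lam" "b = lag_quad th2" "c = lag_const V lam" for a b c
    using qf that by blast
  have "D_QPBO V P E th1 th2 lam \<le> ereal (lag_const V lam + (\<Sum>a\<in>V\<times>P. lag_lin th1 lam a * z1 a) + (\<Sum>e\<in>lag_vars E P. lag_quad th2 e * z11 e))"
    unfolding D_QPBO_def qpbo_lp_value_def by (rule Inf_lower[OF val]) auto
  also have "\<dots> = ereal ((\<Sum>i\<in>V. \<Sum>p\<in>P. th1 i p * y1 i p) + (\<Sum>(i,j)\<in>E. \<Sum>p\<in>P. \<Sum>q\<in>P. th2 i j p q * y2 i j p q))"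
  proof -
    have s1: "(\<Sum>i\<in>V. lam i * ((\<Sum>p\<in>P. z1 (i,p)) - 1)) = 0"
      using feas by (auto simp: local_lp_feasible_def z1_def intro!: sum.neutral)
    show ?thesis unfolding D_obj[OF fin] s1 local_obj_eq
      by (simp add: z1_def z11_def)
  qed
  finally show ?thesis .
qed

lemma sum_I:
  fixes F :: "('a \<times> 'b) + ('c \<times> 'd) \<Rightarrow> real"
  assumes "finite A" "finite B"
  shows "(\<Sum>v\<in>Inl ` A \<union> Inr ` B. F v) = (\<Sum>a\<in>A. F (Inl a)) + (\<Sum>b\<in>B. F (Inr b))"
  using assms by (subst sum.union_disjoint) (auto simp: sum.reindex)

lemma ifm: "(if b then (1::real) else 0) * X = (if b then X else 0)" by simp
lemma ifm2: "(if b then (-1::real) else 0) * X = (if b then - X else 0)" by simp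

lemma strong:
  fixes V :: "'v set" and P :: "'p set" and E :: "('v \<times> 'v) set"
    and th1 :: "'v \<Rightarrow> 'p \<Rightarrow> real" and th2 :: "'v \<Rightarrow> 'v \<Rightarrow> 'p \<Rightarrow> 'p \<Rightarrow> real"
  assumes finV: "finite V" and finP: "finite P" and EV: "E \<subseteq> V \<times> V" and Pne: "P \<noteq> {}"
    and lb: "\<And>y1 y2. local_lp_feasible V P E y1 y2 \<Longrightarrow>
       r \<le> (\<Sum>i\<in>V. \<Sum>p\<in>P. th1 i p * y1 i p) + (\<Sum>(i,j)\<in>E. \<Sum>p\<in>P. \<Sum>q\<in>P. th2 i j p q * y2 i j p q)"
  shows "\<exists>lam. ereal r \<le> D_QPBO V P E th1 th2 lam"
proof -
  have finE: "finite E" using EV finV by (meson finite_SigmaI rev_finite_subset)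
  define EPP where "EPP = E \<times> (P \<times> P)"
  have finEPP: "finite EPP" using finE finP by (simp add: EPP_def)
  define I :: "(('v \<times> 'p) + (('v \<times> 'v) \<times> ('p \<times> 'p))) set" where "I = Inl ` (V \<times> P) \<union> Inr ` EPP"
  have finI: "finite I" using finV finP finEPP by (simp add: I_def)
  define A :: "('v \<times> 'v) \<times> ('p \<times> 'p) \<Rightarrow> ('v \<times> 'p) + (('v \<times> 'v) \<times> ('p \<times> 'p))"
    where "A b = Inl (fst (fst b), fst (snd b))" for b
  define B :: "('v \<times> 'v) \<times> ('p \<times> 'p) \<Rightarrow> ('v \<times> 'p) + (('v \<times> 'v) \<times> ('p \<times> 'p))"
    where "B b = Inl (snd (fst b), snd (snd b))" for b
  have inI: "Inl a \<in> I" if "a \<in> V \<times> P" for a using that by (simp add: I_def)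
  have inIr: "Inr b \<in> I" if "b \<in> EPP" for b using that by (simp add: I_def)
  have inA: "A b \<in> I" if "b \<in> EPP" for b using that EV by (auto simp: I_def A_def EPP_def)
  have inB: "B b \<in> I" if "b \<in> EPP" for b using that EV by (auto simp: I_def B_def EPP_def)
  define KM :: "(('v \<times> 'p) + (('v \<times> 'v) \<times> ('p \<times> 'p))) form set" where "KM = (\<lambda>a. (\<lambda>u. eI (Inl a) u, 0)) ` (V\<times>P) \<union> (\<lambda>a. (\<lambda>u. - eI (Inl a) u, 1)) ` (V\<times>P)
     \<union> (\<lambda>b. (\<lambda>u. eI (Inr b) u, 0)) ` EPP \<union> (\<lambda>b. (\<lambda>u. eI (A b) u - eI (Inr b) u, 0)) ` EPP
     \<union> (\<lambda>b. (\<lambda>u. eI (B b) u - eI (Inr b) u, 0)) ` EPP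
     \<union> (\<lambda>b. (\<lambda>u. eI (Inr b) u - eI (A b) u - eI (B b) u, 1)) ` EPP"
  define KG :: "(('v \<times> 'p) + (('v \<times> 'v) \<times> ('p \<times> 'p))) form set" where "KG = (\<lambda>i. (\<lambda>u. \<Sum>p\<in>P. eI (Inl (i,p)) u, -1)) ` V \<union> (\<lambda>i. (\<lambda>u. - (\<Sum>p\<in>P. eI (Inl (i,p)) u), 1)) ` V"
  define K where "K = KM \<union> KG"
  have finK: "finite K" using finV finP finEPP by (simp add: K_def KM_def KG_def)
  have satKM: "(\<forall>f\<in>KM. 0 \<le> ev I f y) \<longleftrightarrow>
     (\<forall>a\<in>V\<times>P. 0 \<le> y (Inl a) \<and> y (Inl a) \<le> 1) \<and>
     (\<forall>b\<in>EPP. 0 \<le> y (Inr b) \<and> y (Inr b) \<le> y (A b) \<and> y (Inr b) \<le> y (B b) \<and> y (A b) + y (B b) - 1 \<le> y (Inr b))" for y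
    unfolding KM_def using finI inI inIr inA inB
    apply (simp add: ev_e1 ev_eneg ev_e2 ev_e3 ball_Un)
    by auto
  have satKG: "(\<forall>f\<in>KG. 0 \<le> ev I f y) \<longleftrightarrow> (\<forall>i\<in>V. (\<Sum>p\<in>P. y (Inl (i,p))) = 1)" for y
    unfolding KG_def using finI finP inI
    apply (simp add: ev_gsum ev_gsumneg ball_Un)
    by (auto intro: antisym)
  define u where "u v = (case v of Inl (i,p) \<Rightarrow> th1 i p | Inr ((i,j),(p,q)) \<Rightarrow> th2 i j p q)" for v
  have sumu: "(\<Sum>v\<in>I. u v * y v) = (\<Sum>(i,p)\<in>V\<times>P. th1 i p * y (Inl (i,p))) + (\<Sum>((i,j),(p,q))\<in>EPP. th2 i j p q * y (Inr ((i,j),(p,q))))" for y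
    unfolding I_def using finV finP finEPP by (simp add: sum_I u_def case_prod_beta)
  obtain p0 where p0: "p0 \<in> P" using Pne by blast
  define x0 :: "('v \<times> 'p) + (('v \<times> 'v) \<times> ('p \<times> 'p)) \<Rightarrow> real" where
    "x0 v = (case v of Inl (i,p) \<Rightarrow> (if p = p0 then 1 else 0)
       | Inr ((i,j),(p,q)) \<Rightarrow> (if p = p0 then 1 else 0) * (if q = p0 then 1 else 0))" for v
  have x0feas: "\<forall>f\<in>K. 0 \<le> ev I f x0"
  proof -
    have "\<forall>f\<in>KM. 0 \<le> ev I f x0" unfolding satKM
      by (auto simp: x0_def A_def B_def)
    moreover have "\<forall>f\<in>KG. 0 \<le> ev I f x0" unfolding satKG
      using finP p0 by (simp add: x0_def)
    ultimately show ?thesis unfolding K_def by blast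
  qed
  have impl: "0 \<le> - r + (\<Sum>v\<in>I. u v * x v)" if xK: "\<forall>f\<in>K. 0 \<le> ev I f x" for x
  proof -
    have m: "\<forall>f\<in>KM. 0 \<le> ev I f x" and g: "\<forall>f\<in>KG. 0 \<le> ev I f x" using xK by (auto simp: K_def)
    note m' = m[unfolded satKM] and g' = g[unfolded satKG]
    define y1 where "y1 i p = x (Inl (i,p))" for i p
    define y2 where "y2 i j p q = x (Inr ((i,j),(p,q)))" for i j p q
    have "local_lp_feasible V P E y1 y2"
      unfolding local_lp_feasible_def
    proof (intro conjI)
      show "\<forall>i\<in>V. \<forall>p\<in>P. 0 \<le> y1 i p \<and> y1 i p \<le> 1" using m' by (auto simp: y1_def)
      show "\<forall>i\<in>V. (\<Sum>p\<in>P. y1 i p) = 1" using g' by (auto simp: y1_def)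
      show "\<forall>(i,j)\<in>E. \<forall>p\<in>P. \<forall>q\<in>P. 0 \<le> y2 i j p q \<and> y2 i j p q \<le> 1 \<and>
          y2 i j p q \<le> y1 i p \<and> y2 i j p q \<le> y1 j q \<and> y2 i j p q \<ge> y1 i p + y1 j q - 1"
      proof (intro ballI)
      fix e assume e: "e \<in> E"
      obtain i j where ij: "e = (i,j)" by force
      have iV: "i \<in> V" "j \<in> V" using EV e ij by auto
      show "case e of (i, j) \<Rightarrow> \<forall>p\<in>P. \<forall>q\<in>P. 0 \<le> y2 i j p q \<and> y2 i j p q \<le> 1 \<and>
          y2 i j p q \<le> y1 i p \<and> y2 i j p q \<le> y1 j q \<and> y1 i p + y1 j q - 1 \<le> y2 i j p q"
        unfolding ij prod.case
      proof (intro ballI)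
        fix p q assume pq: "p \<in> P" "q \<in> P"
        have b: "((i,j),(p,q)) \<in> EPP" using e ij pq by (simp add: EPP_def)
        have le1: "y1 i p \<le> 1" using m' iV pq by (auto simp: y1_def)
        show "0 \<le> y2 i j p q \<and> y2 i j p q \<le> 1 \<and>
          y2 i j p q \<le> y1 i p \<and> y2 i j p q \<le> y1 j q \<and> y1 i p + y1 j q - 1 \<le> y2 i j p q"
          using m' b le1 by (auto simp: y1_def y2_def A_def B_def)
      qed
      qed
    qed
    from lb[OF this] have "r \<le> (\<Sum>v\<in>I. u v * x v)"
      unfolding local_obj_eq sumu by (simp add: y1_def y2_def EPP_def)
    then show ?thesis by simp
  qed
  from farkas[OF finI finK x0feas, of "-r" u] impl obtain \<psi> where
    psi: "\<psi> \<in> fcone K" "\<forall>i\<in>I. fst \<psi> i = u i" "snd \<psi> \<le> - r" by blast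
  define S where "S = {f. \<exists>\<alpha>\<in>fcone KM. \<exists>\<nu>. \<forall>y. ev I f y = ev I \<alpha> y + (\<Sum>i\<in>V. \<nu> i * ((\<Sum>p\<in>P. y (Inl (i,p))) - 1))}"
  have "fcone K \<subseteq> S"
  proof (rule fcone_least)
    show "((\<lambda>_. 0), 0) \<in> S" unfolding S_def
      by (intro CollectI bexI[OF _ fcone.zero] exI[of _ "\<lambda>_. 0"]) (simp add: ev_zero)
    show "K \<subseteq> S"
    proof
      fix f assume "f \<in> K"
      then consider "f \<in> KM" | i where "i \<in> V" "f = (\<lambda>u. \<Sum>p\<in>P. eI (Inl (i,p)) u, -1)"
        | i where "i \<in> V" "f = (\<lambda>u. - (\<Sum>p\<in>P. eI (Inl (i,p)) u), 1)"
        by (auto simp: K_def KG_def)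
      then show "f \<in> S"
      proof cases
        case 1 then show ?thesis unfolding S_def
          by (intro CollectI bexI[OF _ fcone.base] exI[of _ "\<lambda>_. 0"]) auto
      next
        case 2
        have "ev I f y = ev I ((\<lambda>_. 0), 0) y + (\<Sum>k\<in>V. (if k = i then 1 else 0) * ((\<Sum>p\<in>P. y (Inl (k,p))) - 1))" for y
          using 2 finI finP finV inI by (simp add: ev_gsum ev_zero ifm)
        then show ?thesis unfolding S_def
          by (intro CollectI bexI[OF _ fcone.zero] exI[of _ "\<lambda>k. if k = i then 1 else 0"] allI)
      next
        case 3
        have "ev I f y = ev I ((\<lambda>_. 0), 0) y + (\<Sum>k\<in>V. (if k = i then -1 else 0) * ((\<Sum>p\<in>P. y (Inl (k,p))) - 1))" for y
          using 3 finI finP finV inI by (simp add: ev_gsumneg ev_zero ifm2 sum_negf)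
        then show ?thesis unfolding S_def
          by (intro CollectI bexI[OF _ fcone.zero] exI[of _ "\<lambda>k. if k = i then -1 else 0"] allI)
      qed
    qed
    show "fadd f g \<in> S" if "f \<in> S" "g \<in> S" for f g
    proof -
      from that obtain \<alpha>1 \<nu>1 \<alpha>2 \<nu>2 where
        h: "\<alpha>1 \<in> fcone KM" "\<forall>y. ev I f y = ev I \<alpha>1 y + (\<Sum>i\<in>V. \<nu>1 i * ((\<Sum>p\<in>P. y (Inl (i,p))) - 1))"
           "\<alpha>2 \<in> fcone KM" "\<forall>y. ev I g y = ev I \<alpha>2 y + (\<Sum>i\<in>V. \<nu>2 i * ((\<Sum>p\<in>P. y (Inl (i,p))) - 1))"
        unfolding S_def by blast
      show ?thesis unfolding S_def
        apply (intro CollectI bexI[OF _ fcone.add[OF h(1) h(3)]] exI[of _ "\<lambda>i. \<nu>1 i + \<nu>2 i"] allI)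
        using h by (simp add: ev_fadd distrib_right sum.distrib)
    qed
    show "fscale r f \<in> S" if "f \<in> S" "0 \<le> r" for f r
    proof -
      from that obtain \<alpha>1 \<nu>1 where
        h: "\<alpha>1 \<in> fcone KM" "\<forall>y. ev I f y = ev I \<alpha>1 y + (\<Sum>i\<in>V. \<nu>1 i * ((\<Sum>p\<in>P. y (Inl (i,p))) - 1))"
        unfolding S_def by blast
      show ?thesis unfolding S_def
        apply (intro CollectI bexI[OF _ fcone.scale[OF h(1) that(2)]] exI[of _ "\<lambda>i. r * \<nu>1 i"] allI)
        using h by (simp add: ev_fscale distrib_left sum_distrib_left mult.assoc)
    qed
  qed
  with psi obtain \<alpha> \<nu> where al: "\<alpha> \<in> fcone KM"
    and dec: "\<And>y. ev I \<psi> y = ev I \<alpha> y + (\<Sum>i\<in>V. \<nu> i * ((\<Sum>p\<in>P. y (Inl (i,p))) - 1))"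
    unfolding S_def by blast
  define lam where "lam i = - \<nu> i" for i
  have "ereal r \<le> D_QPBO V P E th1 th2 lam"
    unfolding D_QPBO_def qpbo_lp_value_def
  proof (rule Inf_greatest, clarify)
    fix z1 z0 z11 z10 z01 z00
    assume qf: "qpbo_feasible (V \<times> P) (lag_vars E P) z1 z0 z11 z10 z01 z00"
    define y :: "('v \<times> 'p) + (('v \<times> 'v) \<times> ('p \<times> 'p)) \<Rightarrow> real" where
      "y v = (case v of Inl a \<Rightarrow> z1 a | Inr ((i,j),(p,q)) \<Rightarrow> z11 ((i,p),(j,q)))" for v
    have yV: "\<forall>a\<in>V\<times>P. 0 \<le> y (Inl a) \<and> y (Inl a) \<le> 1"
    proof
      fix a assume "a \<in> V \<times> P"
      then have "0 \<le> z1 a \<and> 0 \<le> z0 a \<and> z1 a + z0 a = 1" using qf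
        unfolding qpbo_feasible_def by blast
      then show "0 \<le> y (Inl a) \<and> y (Inl a) \<le> 1"
        by (auto simp: y_def)
    qed
    have yE: "\<forall>b\<in>EPP. 0 \<le> y (Inr b) \<and> y (Inr b) \<le> y (A b) \<and> y (Inr b) \<le> y (B b) \<and> y (A b) + y (B b) - 1 \<le> y (Inr b)"
    proof
      fix b assume b: "b \<in> EPP"
      obtain i j p q where bb: "b = ((i,j),(p,q))" by (metis prod.collapse)
      have mem: "(i,j) \<in> E" "p \<in> P" "q \<in> P" using b bb by (auto simp: EPP_def)
      have iV: "(i,p) \<in> V \<times> P" "(j,q) \<in> V \<times> P" using mem EV by auto
      have lv: "((i,p),(j,q)) \<in> lag_vars E P" using mem by (auto simp: lag_vars_def)
      have c1: "z11 ((i,p),(j,q)) \<ge> 0" "z10 ((i,p),(j,q)) \<ge> 0" "z01 ((i,p),(j,q)) \<ge> 0" "z00 ((i,p),(j,q)) \<ge> 0"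
        "z10 ((i,p),(j,q)) + z11 ((i,p),(j,q)) = z1 (i,p)"
        "z01 ((i,p),(j,q)) + z00 ((i,p),(j,q)) = z0 (i,p)"
        "z01 ((i,p),(j,q)) + z11 ((i,p),(j,q)) = z1 (j,q)"
        using qf lv unfolding qpbo_feasible_def by fastforce+
      have c2: "z1 (i,p) + z0 (i,p) = 1" using qf iV unfolding qpbo_feasible_def by fastforce
      show "0 \<le> y (Inr b) \<and> y (Inr b) \<le> y (A b) \<and> y (Inr b) \<le> y (B b) \<and> y (A b) + y (B b) - 1 \<le> y (Inr b)"
        using c1 c2 by (simp add: bb y_def A_def B_def)
    qed
    have yKM: "\<forall>f\<in>KM. 0 \<le> ev I f y" unfolding satKM using yV yE by blast
    have e1: "ev I \<psi> y = snd \<psi> + (\<Sum>v\<in>I. u v * y v)"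
      unfolding ev_def using psi(2) by (simp cong: sum.cong)
    have e2: "0 \<le> ev I \<alpha> y" using fcone_nonneg[OF al yKM] .
    have e3: "(\<Sum>v\<in>I. u v * y v) = (\<Sum>(i,p)\<in>V\<times>P. th1 i p * z1 (i,p)) + (\<Sum>((i,j),(p,q))\<in>E\<times>(P\<times>P). th2 i j p q * z11 ((i,p),(j,q)))"
      unfolding sumu by (simp add: y_def EPP_def)
    have e4: "(\<Sum>i\<in>V. lam i * ((\<Sum>p\<in>P. z1 (i,p)) - 1)) = - (\<Sum>i\<in>V. \<nu> i * ((\<Sum>p\<in>P. y (Inl (i,p))) - 1))"
      by (simp add: lam_def y_def sum_negf)
    have "r \<le> lag_const V lam + (\<Sum>a\<in>V \<times> P. lag_lin th1 lam a * z1 a) + (\<Sum>e\<in>lag_vars E P. lag_quad th2 e * z11 e)"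
      unfolding D_obj[OF finV finP] e4 using dec[of y] e1 e2 e3 psi(3) by linarith
    then show "ereal r \<le> ereal (lag_const V lam + (\<Sum>a\<in>V \<times> P. lag_lin th1 lam a * z1 a) + (\<Sum>e\<in>lag_vars E P. lag_quad th2 e * z11 e))"
      by simp
  qed
  then show ?thesis by blast
qed

lemma D_emptyP: "D_QPBO V {} E th1 th2 lam = ereal (- (\<Sum>i\<in>V. lam i))"
proof -
  have lv: "lag_vars E {} = {}" by (auto simp: lag_vars_def)
  have "{ereal (lag_const V lam + (\<Sum>i\<in>V \<times> {}. lag_lin th1 lam i * z1 i) + (\<Sum>e\<in>lag_vars E {}. lag_quad th2 e * z11 e)) |
       z1 z0 z11 z10 z01 z00. qpbo_feasible (V \<times> {}) (lag_vars E {}) z1 z0 z11 z10 z01 z00}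
      = {ereal (- (\<Sum>i\<in>V. lam i))}"
    by (auto simp: lv qpbo_feasible_def lag_const_def)
  then show ?thesis unfolding D_QPBO_def qpbo_lp_value_def by simp
qed

theorem theorem8:
  fixes V :: "'v set" and P :: "'p set" and E :: "('v \<times> 'v) set"
    and th1 :: "'v \<Rightarrow> 'p \<Rightarrow> real" and th2 :: "'v \<Rightarrow> 'v \<Rightarrow> 'p \<Rightarrow> 'p \<Rightarrow> real"
  assumes "finite V" and "finite P"
    and "E \<subseteq> V \<times> V"
    and "\<forall>(i,j)\<in>E. i \<noteq> j"
    and "\<forall>(i,j)\<in>E. (j,i) \<notin> E"
  shows "(SUP lam. D_QPBO V P E th1 th2 lam) = local_lp_value V P E th1 th2
         \<and> (P \<noteq> {} \<longrightarrow> (\<exists>lam. D_QPBO V P E th1 th2 lam = local_lp_value V P E th1 th2))"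
proof (cases "P = {}")
  case True
  show ?thesis
  proof (cases "V = {}")
    case True
    with assms(3) have E: "E = {}" by auto
    have "local_lp_value V P E th1 th2 = 0"
    proof -
      have "{ereal ((\<Sum>i\<in>V. \<Sum>p\<in>P. th1 i p * y1 i p) + (\<Sum>(i,j)\<in>E. \<Sum>p\<in>P. \<Sum>q\<in>P. th2 i j p q * y2 i j p q)) | y1 y2.
           local_lp_feasible V P E y1 y2 } = {0}"
        using True E by (auto simp: local_lp_feasible_def zero_ereal_def)
      then show ?thesis unfolding local_lp_value_def by simp
    qed
    then show ?thesis using \<open>P = {}\<close> True by (simp add: D_emptyP zero_ereal_def)
  next
    case False
    have "local_lp_value V P E th1 th2 = \<infinity>"
    proof -
      have "{ereal ((\<Sum>i\<in>V. \<Sum>p\<in>P. th1 i p * y1 i p) + (\<Sum>(i,j)\<in>E. \<Sum>p\<in>P. \<Sum>q\<in>P. th2 i j p q * y2 i j p q)) | y1 y2.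
           local_lp_feasible V P E y1 y2 } = {}"
        using \<open>P = {}\<close> False by (auto simp: local_lp_feasible_def)
      then show ?thesis unfolding local_lp_value_def by (simp add: top_ereal_def)
    qed
    moreover have "(SUP lam. D_QPBO V P E th1 th2 lam) = \<infinity>"
    proof -
      have cV: "card V \<ge> 1" using False assms(1) by (simp add: Suc_le_eq card_gt_0_iff)
      have "\<exists>lam. x < D_QPBO V P E th1 th2 lam" if xl: "x < \<infinity>" for x
      proof -
        obtain r where r: "x \<le> ereal r" using xl
          by (cases x) auto
        define lam where "lam = (\<lambda>i::'v. - (\<bar>r\<bar> + 1))"
        have "(\<Sum>i\<in>V. lam i) = - (real (card V) * (\<bar>r\<bar> + 1))" by (simp add: lam_def algebra_simps)
        moreover have "real (card V) * (\<bar>r\<bar> + 1) \<ge> 1 * (\<bar>r\<bar> + 1)"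
          using cV by (intro mult_right_mono) auto
        ultimately have "r < - (\<Sum>i\<in>V. lam i)" using abs_ge_self[of r] by (smt (verit))
        then have rl: "ereal r < ereal (- (\<Sum>i\<in>V. lam i))" by simp
        have "x < D_QPBO V P E th1 th2 lam" using le_less_trans[OF r rl] \<open>P = {}\<close> by (simp add: D_emptyP)
        then show ?thesis by blast
      qed
      then show ?thesis by (simp add: top_ereal_def[symmetric])
    qed
    ultimately show ?thesis using \<open>P = {}\<close> by simp
  qed
next
  case False
  note fin = assms(1,2) and EV = assms(3)
  define L where "L = local_lp_value V P E th1 th2"
  have weak': "D_QPBO V P E th1 th2 lam \<le> L" for lam
    unfolding L_def local_lp_value_def
    by (rule Inf_greatest) (auto intro: weak[OF fin EV])
  have lower: "L \<le> ereal ((\<Sum>i\<in>V. \<Sum>p\<in>P. th1 i p * y1 i p) + (\<Sum>(i,j)\<in>E. \<Sum>p\<in>P. \<Sum>q\<in>P. th2 i j p q * y2 i j p q))"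
    if "local_lp_feasible V P E y1 y2" for y1 y2
    unfolding L_def local_lp_value_def by (rule Inf_lower) (use that in blast)
  have ex: "\<exists>lam. D_QPBO V P E th1 th2 lam = L"
  proof (cases L)
    case (real r)
    have "\<exists>lam. ereal r \<le> D_QPBO V P E th1 th2 lam"
      by (rule strong[OF fin EV False]) (use lower real in force)
    then obtain lam where "ereal r \<le> D_QPBO V P E th1 th2 lam" by blast
    then show ?thesis using weak'[of lam] real by (metis antisym)
  next
    case PInf
    obtain p0 where p0: "p0 \<in> P" using False by blast
    define y1 where "y1 i p = (if p = p0 then 1 else (0::real))" for i :: 'v and p
    define y2 where "y2 i j p q = y1 i p * y1 j q" for i j :: 'v and p q
    have "local_lp_feasible V P E y1 y2"
      unfolding local_lp_feasible_def using fin p0 by (auto simp: y1_def y2_def)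
    from lower[OF this] PInf show ?thesis by simp
  next
    case MInf
    then show ?thesis using weak'[of "\<lambda>_. 0"] by auto
  qed
  then obtain lam0 where lam0: "D_QPBO V P E th1 th2 lam0 = L" by blast
  have "(SUP lam. D_QPBO V P E th1 th2 lam) = L"
  proof (rule antisym)
    show "(SUP lam. D_QPBO V P E th1 th2 lam) \<le> L" by (rule SUP_least) (rule weak')
    show "L \<le> (SUP lam. D_QPBO V P E th1 th2 lam)" using lam0 by (metis SUP_upper UNIV_I)
  qed
  then show ?thesis using lam0 unfolding L_def by blast
qed


end
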